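(* Let $\mathcal{E}$ be a multiclass tree ensemble with classes $\{0,\dots,C-1\}$, $F\subseteq\mathcal{F}$ a set of sensitive features, $c^{(1)},c^{(2)}$ classes, and $g>0$ with $\eta=\ln g$. The set of feasible solutions of the MILP consisting of constraints (C1)–(C5) below together with (Gap-multi) equals the set of feasible solutions of the MILP obtained by additionally imposing (Aff-multi) $\sum_{n\in\mathcal{L}_{c^{(1)}}\setminus\mathcal{U}}\left(l^{(1)}_n\,n.val-l^{(2)}_n\,n.val\right)+\sum_{n\in\mathcal{L}_{c^{(2)}}\setminus\mathcal{U}}\left(l^{(2)}_n\,n.val-l^{(1)}_n\,n.val\right)>2\eta$.
   Context: A decision tree is either a leaf $n$ with real value $n.val$ or an internal node with guard $X_f<\tau$ and children $n.yes$ (taken when $x_f<\tau$) and $n.no$. A multiclass tree ensemble has its trees partitioned into sets $\mathcal{T}_0,\dots,\mathcal{T}_{C-1}$, one per class; $\mathcal{L}_c$ denotes the set of leaves of trees in $\mathcal{T}_c$, and $\mathcal{A}$ the set of all leaves. For each feature $f$, $\tau_{f1}<\dots<\tau_{fK_f}$ are the distinct thresholds of guards on $f$. For an internal node $n$, $TSet(n)$ and $FSet(n)$ are the leaves of the subtrees rooted at $n.yes$ and $n.no$. Variables: for $c\in\{1,2\}$, binary $p^{(c)}_{fk}\in\{0,1\}$ for each feature $f$ and $k\le K_f$, and continuous $0\le l^{(c)}_n\le1$ for each leaf $n$. (C1) $p^{(c)}_{f1}\le\dots\le p^{(c)}_{fK_f}$ for each $f$; (C2) for each tree, the sum of $l^{(c)}_n$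 over its leaves is $1$; (C3) for each root node with guard $X_f<\tau_{fk}$: $1-\sum_{n\in FSet}l^{(c)}_n=p^{(c)}_{fk}=\sum_{n\in TSet}l^{(c)}_n$; (C4) for each non-root internal node with guard $X_f<\tau_{fk}$: $1-\sum_{n\in FSet}l^{(c)}_n\ge p^{(c)}_{fk}\ge\sum_{n\in TSet}l^{(c)}_n$; (C5) $p^{(1)}_{fk}=p^{(2)}_{fk}$ for all $f\notin F$ and all $k$; (Gap-multi) for every class $c\ne c^{(1)}$: $\sum_{n\in\mathcal{L}_{c^{(1)}}}l^{(1)}_n\,n.val>\sum_{n\in\mathcal{L}_c}l^{(1)}_n\,n.val+\eta$, and for every class $c\ne c^{(2)}$: $\sum_{n\in\mathcal{L}_{c^{(2)}}}l^{(2)}_n\,n.val>\sum_{n\in\mathcal{L}_c}l^{(2)}_n\,n.val+\eta$. A leaf is unaffected if no guard on the path from its tree's root to it involves a feature of $F$; $\mathcal{U}$ is the set of unaffected leaves. *)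

theory Defs
  imports Complex_Main "HOL-Library.Sublist"
begin

text \<open>Decision trees: a leaf carries a real value; an internal node
  \<open>Node f \<tau> yes no\<close> has guard \<open>X_f < \<tau>\<close>, child \<open>yes\<close> taken when \<open>x_f < \<tau>\<close>.\<close>
datatype dtree = Leaf real | Node nat real dtree dtree

text \<open>Positions in a tree are paths (True = yes-branch, False = no-branch).\<close>
fun leaf_paths :: "dtree \<Rightarrow> bool list set" where
  "leaf_paths (Leaf v) = {[]}"
| "leaf_paths (Node f \<tau> y n) = Cons True ` leaf_paths y \<union> Cons False ` leaf_paths n"

fun internal_paths :: "dtree \<Rightarrow> bool list set" where
  "internal_paths (Leaf v) = {}"
| "internal_paths (Node f \<tau> y n) =
     {[]} \<union> Cons True ` internal_paths y \<union> Cons False ` internal_paths n"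

fun subtree_at :: "dtree \<Rightarrow> bool list \<Rightarrow> dtree" where
  "subtree_at t [] = t"
| "subtree_at (Node f \<tau> y n) (b # ps) = subtree_at (if b then y else n) ps"
| "subtree_at (Leaf v) (b # ps) = Leaf v"

text \<open>An ensemble is a list of trees, each tagged with its class.
  A leaf is identified by (index of its tree, path to it).\<close>
type_synonym ensemble = "(nat \<times> dtree) list"
type_synonym leaf = "nat \<times> bool list"

definition tree_of :: "ensemble \<Rightarrow> nat \<Rightarrow> dtree" where
  "tree_of E i = snd (E ! i)"

definition leaf_val :: "ensemble \<Rightarrow> leaf \<Rightarrow> real" where
  "leaf_val E n = (case subtree_at (tree_of E (fst n)) (snd n) of Leaf v \<Rightarrow> v | _ \<Rightarrow> 0)"

definition tree_leaves :: "ensemble \<Rightarrow> nat \<Rightarrow> leaf set" where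
  "tree_leaves E i = (\<lambda>ps. (i, ps)) ` leaf_paths (tree_of E i)"

definition all_leaves :: "ensemble \<Rightarrow> leaf set" where
  "all_leaves E = (\<Union>i<length E. tree_leaves E i)"

definition class_leaves :: "ensemble \<Rightarrow> nat \<Rightarrow> leaf set" where
  "class_leaves E c = (\<Union>i\<in>{i. i < length E \<and> fst (E ! i) = c}. tree_leaves E i)"

definition TSet :: "ensemble \<Rightarrow> nat \<Rightarrow> bool list \<Rightarrow> leaf set" where
  "TSet E i q = {(i, ps) | ps. ps \<in> leaf_paths (tree_of E i) \<and> prefix (q @ [True]) ps}"

definition FSet :: "ensemble \<Rightarrow> nat \<Rightarrow> bool list \<Rightarrow> leaf set" where
  "FSet E i q = {(i, ps) | ps. ps \<in> leaf_paths (tree_of E i) \<and> prefix (q @ [False]) ps}"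

text \<open>Thresholds of guards on feature f (the \<open>\<tau>_{f1} < ... < \<tau>_{fK_f}\<close>);
  the variable \<open>p_{fk}\<close> is indexed by the threshold value \<open>\<tau>_{fk}\<close> itself.\<close>
definition thresholds :: "ensemble \<Rightarrow> nat \<Rightarrow> real set" where
  "thresholds E f = {\<tau>. \<exists>i q y n. i < length E \<and> q \<in> internal_paths (tree_of E i) \<and>
                          subtree_at (tree_of E i) q = Node f \<tau> y n}"

definition single_copy_constraints ::
  "ensemble \<Rightarrow> (nat \<Rightarrow> real \<Rightarrow> real) \<Rightarrow> (leaf \<Rightarrow> real) \<Rightarrow> bool" where
  "single_copy_constraints E p l \<longleftrightarrow>
     (\<forall>f. \<forall>\<tau>\<in>thresholds E f. p f \<tau> \<in> {0, 1}) \<and>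
     (\<forall>n\<in>all_leaves E. 0 \<le> l n \<and> l n \<le> 1) \<and>
     \<comment> \<open>(C1)\<close>
     (\<forall>f. \<forall>\<tau>\<in>thresholds E f. \<forall>\<tau>'\<in>thresholds E f. \<tau> \<le> \<tau>' \<longrightarrow> p f \<tau> \<le> p f \<tau>') \<and>
     \<comment> \<open>(C2)\<close>
     (\<forall>i<length E. (\<Sum>n\<in>tree_leaves E i. l n) = 1) \<and>
     \<comment> \<open>(C3)\<close>
     (\<forall>i<length E. \<forall>f \<tau> y n. tree_of E i = Node f \<tau> y n \<longrightarrow>
        1 - (\<Sum>m\<in>FSet E i []. l m) = p f \<tau> \<and> p f \<tau> = (\<Sum>m\<in>TSet E i []. l m)) \<and>
     \<comment> \<open>(C4)\<close>
     (\<forall>i<length E. \<forall>q\<in>internal_paths (tree_of E i). \<forall>f \<tau> y n.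
        q \<noteq> [] \<longrightarrow> subtree_at (tree_of E i) q = Node f \<tau> y n \<longrightarrow>
        1 - (\<Sum>m\<in>FSet E i q. l m) \<ge> p f \<tau> \<and> p f \<tau> \<ge> (\<Sum>m\<in>TSet E i q. l m))"

definition link_constraint ::
  "ensemble \<Rightarrow> nat set \<Rightarrow> (nat \<Rightarrow> real \<Rightarrow> real) \<Rightarrow> (nat \<Rightarrow> real \<Rightarrow> real) \<Rightarrow> bool" where
  "link_constraint E F p1 p2 \<longleftrightarrow>
     (\<forall>f. f \<notin> F \<longrightarrow> (\<forall>\<tau>\<in>thresholds E f. p1 f \<tau> = p2 f \<tau>))"

definition gap_multi ::
  "ensemble \<Rightarrow> nat \<Rightarrow> nat \<Rightarrow> real \<Rightarrow> (leaf \<Rightarrow> real) \<Rightarrow> bool" where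
  "gap_multi E C c0 \<eta> l \<longleftrightarrow>
     (\<forall>c<C. c \<noteq> c0 \<longrightarrow>
        (\<Sum>n\<in>class_leaves E c0. l n * leaf_val E n) >
        (\<Sum>n\<in>class_leaves E c. l n * leaf_val E n) + \<eta>)"

definition guard_feature :: "dtree \<Rightarrow> nat" where
  "guard_feature t = (case t of Node f \<tau> y n \<Rightarrow> f | Leaf v \<Rightarrow> 0)"

definition unaffected :: "ensemble \<Rightarrow> nat set \<Rightarrow> leaf set" where
  "unaffected E F = {(i, ps) \<in> all_leaves E.
      \<forall>j<length ps. guard_feature (subtree_at (tree_of E i) (take j ps)) \<notin> F}"

definition milp_base ::
  "ensemble \<Rightarrow> nat \<Rightarrow> nat set \<Rightarrow> nat \<Rightarrow> nat \<Rightarrow> real \<Rightarrow>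
   (nat \<Rightarrow> real \<Rightarrow> real) \<Rightarrow> (nat \<Rightarrow> real \<Rightarrow> real) \<Rightarrow> (leaf \<Rightarrow> real) \<Rightarrow> (leaf \<Rightarrow> real) \<Rightarrow> bool" where
  "milp_base E C F c1 c2 \<eta> p1 p2 l1 l2 \<longleftrightarrow>
     single_copy_constraints E p1 l1 \<and> single_copy_constraints E p2 l2 \<and>
     link_constraint E F p1 p2 \<and> gap_multi E C c1 \<eta> l1 \<and> gap_multi E C c2 \<eta> l2"

definition aff_multi ::
  "ensemble \<Rightarrow> nat set \<Rightarrow> nat \<Rightarrow> nat \<Rightarrow> real \<Rightarrow> (leaf \<Rightarrow> real) \<Rightarrow> (leaf \<Rightarrow> real) \<Rightarrow> bool" where
  "aff_multi E F c1 c2 \<eta> l1 l2 \<longleftrightarrow>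
     (\<Sum>n\<in>class_leaves E c1 - unaffected E F. l1 n * leaf_val E n - l2 n * leaf_val E n) +
     (\<Sum>n\<in>class_leaves E c2 - unaffected E F. l2 n * leaf_val E n - l1 n * leaf_val E n)
     > 2 * \<eta>"

end

theory Submission
  imports Defs
begin


lemma finite_leaf_paths: "finite (leaf_paths t)"
  by (induction t) auto

lemma leaf_prefix_internal:
  "ps \<in> leaf_paths t \<Longrightarrow> j < length ps \<Longrightarrow>
   take j ps \<in> internal_paths t \<and> (\<exists>f \<tau> y n. subtree_at t (take j ps) = Node f \<tau> y n)"
proof (induction t arbitrary: ps j)
  case (Leaf v) then show ?case by simp
next
  case (Node f \<tau> y n)
  then show ?case
    by (cases j) (auto simp: take_Cons')
qed

lemma leaf_paths_diff:
  "ps \<in> leaf_paths t \<Longrightarrow> ps' \<in> leaf_paths t \<Longrightarrow> ps \<noteq> ps' \<Longrightarrow>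
   \<exists>j<length ps. j < length ps' \<and> take j ps = take j ps' \<and> ps ! j \<noteq> ps' ! j"
proof (induction t arbitrary: ps ps')
  case (Leaf v) then show ?case by simp
next
  case (Node f \<tau> y n)
  from Node.prems obtain b xs b' xs' where ps: "ps = b # xs" and ps': "ps' = b' # xs'"
    by auto
  show ?case
  proof (cases "b = b'")
    case False then show ?thesis using ps ps' by (intro exI[of _ 0]) auto
  next
    case True
    then have "xs \<noteq> xs'" using Node.prems ps ps' by auto
    moreover have "(xs \<in> leaf_paths y \<and> xs' \<in> leaf_paths y) \<or> (xs \<in> leaf_paths n \<and> xs' \<in> leaf_paths n)"
      using Node.prems ps ps' True by (cases b) auto
    ultimately obtain j where "j<length xs" "j < length xs'" "take j xs = take j xs'" "xs ! j \<noteq> xs' ! j"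
      using Node.IH by blast
    then show ?thesis using ps ps' True by (intro exI[of _ "Suc j"]) auto
  qed
qed


definition follows :: "dtree \<Rightarrow> (nat \<Rightarrow> real \<Rightarrow> real) \<Rightarrow> bool list \<Rightarrow> bool" where
  "follows t p ps \<longleftrightarrow> (\<forall>j<length ps. \<forall>f \<tau> y n. subtree_at t (take j ps) = Node f \<tau> y n \<longrightarrow>
      (ps ! j \<longleftrightarrow> p f \<tau> = 1))"

lemma tree_leaves_sub: "i < length E \<Longrightarrow> tree_leaves E i \<subseteq> all_leaves E"
  unfolding all_leaves_def by auto

lemma finite_tree_leaves: "finite (tree_leaves E i)"
  unfolding tree_leaves_def by (simp add: finite_leaf_paths)

lemma TSet_sub: "TSet E i q \<subseteq> tree_leaves E i"
  unfolding TSet_def tree_leaves_def by auto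
lemma FSet_sub: "FSet E i q \<subseteq> tree_leaves E i"
  unfolding FSet_def tree_leaves_def by auto

lemma sum_ge_member:
  assumes "finite A" "x \<in> A" "\<forall>m\<in>A. 0 \<le> (l m::real)"
  shows "l x \<le> sum l A"
  using assms by (intro member_le_sum) auto

lemma not_follows_zero:
  assumes sc: "single_copy_constraints E p l" and i: "i < length E"
    and ps: "ps \<in> leaf_paths (tree_of E i)" and nf: "\<not> follows (tree_of E i) p ps"
  shows "l (i, ps) = 0"
proof -
  let ?t = "tree_of E i"
  from nf obtain j f \<tau> y n where j: "j < length ps" and nd: "subtree_at ?t (take j ps) = Node f \<tau> y n"
    and ne: "\<not> (ps ! j \<longleftrightarrow> p f \<tau> = 1)"
    unfolding follows_def by blast
  define q where "q = take j ps"
  have qi: "q \<in> internal_paths ?t" using leaf_prefix_internal[OF ps j] q_def by simp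
  have th: "\<tau> \<in> thresholds E f" unfolding thresholds_def using i qi nd q_def by blast
  have p01: "p f \<tau> \<in> {0,1}" using sc th unfolding single_copy_constraints_def by blast
  have nonneg: "\<forall>m\<in>tree_leaves E i. 0 \<le> l m"
    using sc tree_leaves_sub[OF i] unfolding single_copy_constraints_def by blast
  have inL: "(i, ps) \<in> tree_leaves E i" using ps unfolding tree_leaves_def by auto
  have l0: "0 \<le> l (i, ps)" using nonneg inL by blast
  have bounds: "1 - (\<Sum>m\<in>FSet E i q. l m) \<ge> p f \<tau> \<and> p f \<tau> \<ge> (\<Sum>m\<in>TSet E i q. l m)"
  proof (cases "q = []")
    case True
    then have "take j ps = []" using q_def by simp
    then have "?t = Node f \<tau> y n" using nd by (metis subtree_at.simps(1))
    then show ?thesis using sc i True unfolding single_copy_constraints_def by force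
  next
    case False
    then show ?thesis using sc i qi nd q_def unfolding single_copy_constraints_def by blast
  qed
  have pre: "prefix (q @ [ps ! j]) ps" unfolding q_def using j
    by (metis take_Suc_conv_app_nth take_is_prefix)
  show ?thesis
  proof (cases "ps ! j")
    case True
    then have "p f \<tau> = 0" using ne p01 by auto
    moreover have "(i, ps) \<in> TSet E i q" using pre True ps unfolding TSet_def by auto
    then have "l (i, ps) \<le> (\<Sum>m\<in>TSet E i q. l m)"
      using sum_ge_member[of "TSet E i q" "(i,ps)" l] finite_subset[OF TSet_sub finite_tree_leaves]
        nonneg TSet_sub by blast
    ultimately show ?thesis using bounds l0 by linarith
  next
    case False
    then have "p f \<tau> = 1" using ne p01 by auto
    moreover have "(i, ps) \<in> FSet E i q" using pre False ps unfolding FSet_def by auto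
    then have "l (i, ps) \<le> (\<Sum>m\<in>FSet E i q. l m)"
      using sum_ge_member[of "FSet E i q" "(i,ps)" l] finite_subset[OF FSet_sub finite_tree_leaves]
        nonneg FSet_sub by blast
    ultimately show ?thesis using bounds l0 by linarith
  qed
qed

lemma follows_unique:
  assumes "ps \<in> leaf_paths t" "ps' \<in> leaf_paths t" "follows t p ps" "follows t p ps'"
  shows "ps = ps'"
proof (rule ccontr)
  assume "ps \<noteq> ps'"
  then obtain j where j: "j<length ps" "j < length ps'" "take j ps = take j ps'" "ps ! j \<noteq> ps' ! j"
    using leaf_paths_diff assms by blast
  obtain f \<tau> y n where "subtree_at t (take j ps) = Node f \<tau> y n"
    using leaf_prefix_internal[OF assms(1) j(1)] by blast
  then show False using assms(3,4) j unfolding follows_def by metis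
qed

lemma follows_one:
  assumes sc: "single_copy_constraints E p l" and i: "i < length E"
    and ps: "ps \<in> leaf_paths (tree_of E i)" and fo: "follows (tree_of E i) p ps"
  shows "l (i, ps) = 1"
proof -
  have s1: "(\<Sum>n\<in>tree_leaves E i. l n) = 1" using sc i unfolding single_copy_constraints_def by blast
  have inL: "(i, ps) \<in> tree_leaves E i" using ps unfolding tree_leaves_def by auto
  have "(\<Sum>n\<in>tree_leaves E i. l n) = l (i, ps) + (\<Sum>n\<in>tree_leaves E i - {(i,ps)}. l n)"
    using sum.remove[OF finite_tree_leaves inL] by blast
  moreover have "(\<Sum>n\<in>tree_leaves E i - {(i,ps)}. l n) = 0"
  proof (rule sum.neutral, rule ballI)
    fix m assume m: "m \<in> tree_leaves E i - {(i, ps)}"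
    then obtain ps' where m': "m = (i, ps')" "ps' \<in> leaf_paths (tree_of E i)" "ps' \<noteq> ps"
      unfolding tree_leaves_def by auto
    then have "\<not> follows (tree_of E i) p ps'" using follows_unique ps fo by blast
    then show "l m = 0" using not_follows_zero[OF sc i m'(2)] m' by simp
  qed
  ultimately show ?thesis using s1 by simp
qed

lemma unaffected_eq:
  assumes sc1: "single_copy_constraints E p1 l1" and sc2: "single_copy_constraints E p2 l2"
    and lk: "link_constraint E F p1 p2" and u: "x \<in> unaffected E F"
  shows "l1 x = l2 x"
proof -
  obtain i ps where x: "x = (i, ps)" by (cases x)
  from u x have al: "(i, ps) \<in> all_leaves E" and
    g: "\<forall>j<length ps. guard_feature (subtree_at (tree_of E i) (take j ps)) \<notin> F"
    unfolding unaffected_def by auto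
  from al have i: "i < length E" and ps: "ps \<in> leaf_paths (tree_of E i)"
    unfolding all_leaves_def tree_leaves_def by auto
  have peq: "p1 f \<tau> = p2 f \<tau>" if j: "j < length ps"
    and nd: "subtree_at (tree_of E i) (take j ps) = Node f \<tau> y n" for j f \<tau> y n
  proof -
    have "f \<notin> F" using g j nd unfolding guard_feature_def by force
    moreover have "\<tau> \<in> thresholds E f" unfolding thresholds_def
      using i leaf_prefix_internal[OF ps j] nd by blast
    ultimately show ?thesis using lk unfolding link_constraint_def by blast
  qed
  have eqf: "follows (tree_of E i) p1 ps = follows (tree_of E i) p2 ps"
    unfolding follows_def using peq by metis
  show ?thesis
  proof (cases "follows (tree_of E i) p1 ps")
    case True
    then show ?thesis using follows_one[OF sc1 i ps] follows_one[OF sc2 i ps] eqf x by simp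
  next
    case False
    then show ?thesis using not_follows_zero[OF sc1 i ps] not_follows_zero[OF sc2 i ps] eqf x by simp
  qed
qed


lemma finite_class_leaves: "finite (class_leaves E c)"
  unfolding class_leaves_def by (auto simp: finite_tree_leaves)

lemma aff_part_zero:
  assumes sc1: "single_copy_constraints E p1 l1" and sc2: "single_copy_constraints E p2 l2"
    and lk: "link_constraint E F p1 p2"
  shows "(\<Sum>n\<in>A \<inter> unaffected E F. l1 n * leaf_val E n - l2 n * leaf_val E n) = 0"
  using unaffected_eq[OF sc1 sc2 lk] by (intro sum.neutral) auto

theorem theorem4:
  fixes E :: ensemble and C :: nat and F :: "nat set" and c1 c2 :: nat and g \<eta> :: real
  assumes classes: "\<forall>(c, t) \<in> set E. c < C"
    and c1: "c1 < C" and c2: "c2 < C" and distinct: "c1 \<noteq> c2"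
    and g: "g > 0" and eta: "\<eta> = ln g"
  shows "{(p1, p2, l1, l2). milp_base E C F c1 c2 \<eta> p1 p2 l1 l2} =
         {(p1, p2, l1, l2). milp_base E C F c1 c2 \<eta> p1 p2 l1 l2 \<and> aff_multi E F c1 c2 \<eta> l1 l2}"
proof -
  have "aff_multi E F c1 c2 \<eta> l1 l2" if mb: "milp_base E C F c1 c2 \<eta> p1 p2 l1 l2" for p1 p2 l1 l2
  proof -
    have sc1: "single_copy_constraints E p1 l1" and sc2: "single_copy_constraints E p2 l2"
      and lk: "link_constraint E F p1 p2" and g1: "gap_multi E C c1 \<eta> l1"
      and g2: "gap_multi E C c2 \<eta> l2"
      using mb unfolding milp_base_def by auto
    let ?U = "unaffected E F"
    let ?A = "class_leaves E c1" and ?B = "class_leaves E c2"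
    have i1: "(\<Sum>n\<in>?A. l1 n * leaf_val E n) > (\<Sum>n\<in>?B. l1 n * leaf_val E n) + \<eta>"
      using g1 c2 distinct unfolding gap_multi_def by auto
    have i2: "(\<Sum>n\<in>?B. l2 n * leaf_val E n) > (\<Sum>n\<in>?A. l2 n * leaf_val E n) + \<eta>"
      using g2 c1 distinct unfolding gap_multi_def by auto
    have sA: "(\<Sum>n\<in>?A. l1 n * leaf_val E n - l2 n * leaf_val E n) =
        (\<Sum>n\<in>?A - ?U. l1 n * leaf_val E n - l2 n * leaf_val E n)"
      using sum.Int_Diff[OF finite_class_leaves, of "\<lambda>n. l1 n * leaf_val E n - l2 n * leaf_val E n" E c1 ?U]
        aff_part_zero[OF sc1 sc2 lk, of ?A] by linarith
    have zB: "(\<Sum>n\<in>?B \<inter> ?U. l2 n * leaf_val E n - l1 n * leaf_val E n) = 0"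
      using unaffected_eq[OF sc1 sc2 lk] by (intro sum.neutral) auto
    have sB: "(\<Sum>n\<in>?B. l2 n * leaf_val E n - l1 n * leaf_val E n) =
        (\<Sum>n\<in>?B - ?U. l2 n * leaf_val E n - l1 n * leaf_val E n)"
      using sum.Int_Diff[OF finite_class_leaves, of "\<lambda>n. l2 n * leaf_val E n - l1 n * leaf_val E n" E c2 ?U]
        zB by linarith
    show ?thesis unfolding aff_multi_def using i1 i2 sA[symmetric] sB[symmetric]
      by (simp add: sum_subtractf)
  qed
  then show ?thesis by auto
qed

end
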